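(* Let $W\in\mathrm{Mat}(n,\mathbb{Z})$ be a P-admissible matrix and let $Q=(q_0,\ldots,q_n)$ be a reduced weights vector associated with $W$. Then: (a) $(\widehat W^T)^*_Q=W$; (b) if $s$ is the gcd of all entries of $\mathrm{Adj}(W)$ and $s_i$ is the gcd of the entries of the $i$-th row of $\mathrm{Adj}(W)$, then $q_0=|\det\widehat W|$, $q_i=s_i/s$ for $1\le i\le n$, and $\mathrm{lcm}(Q)=|\det W|/s$; (c) if $Q_1$ and $Q_2$ are reduced weights vectors associated with the same P-admissible matrix $W$, then $Q_1=Q_2$; (d) there exists a unique F-admissible matrix $V$ with $W=(V^0)^*_Q$ and $Q=(|V_0|,\ldots,|V_n|)$.
   Context: A weights vector is an $(n+1)$-tuple of positive integers with gcd $1$; it is reduced if $\gcd(q_i:i\neq j)=1$ for every $j$. For $V=(\mathbf{v}_0,\ldots,\mathbf{v}_n)\in\mathrm{Mat}(n,n+1;\mathbb{Z})$, $V_j$ is the determinant of $V$ with column $\mathbf{v}_j$ deleted and $V^0=(\mathbf{v}_1,\ldots,\mathbf{v}_n)$. $V$ is F-admissible if all $V_j\neq0$, $\gcd(V_0,\ldots,V_n)=1$ and $\sum_j|V_j|\mathbf{v}_j=0$. For $A\in\mathrm{GL}(n,\mathbb{Q})$, $A^*=(A^{-1})^T$. The weighted transverse of $V$ (all $V_j\ne0$) is $(V^0)^*_Q=(V^0)^*\cdot\delta\,\mathrm{diag}(1/|V_1|,\ldots,1/|V_n|)$, where $Q=(|V_0|,\ldots,|V_n|)$ and $\delta=\mathrm{lcm}(Q)$.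 A matrix $W\in\mathrm{Mat}(n,\mathbb{Z})$ is P-admissible if $W=(V^0)^*_Q$ for some F-admissible $V$ with $Q=(|V_0|,\ldots,|V_n|)$; then $Q,W,V$ are said to be associated. For $W\in\mathrm{GL}(n,\mathbb{Q})\cap\mathrm{Mat}(n,\mathbb{Z})$, $\mathrm{Adj}(W)=\det(W)W^{-1}$, $s_i$ is the gcd of the $i$-th row of $\mathrm{Adj}(W)$, and $\widehat W=\mathrm{diag}(|\det W|/s_1,\ldots,|\det W|/s_n)\cdot W^{-1}$. *)

theory Defs
  imports "Jordan_Normal_Form.Determinant" "Jordan_Normal_Form.Gauss_Jordan_Elimination"
begin

text \<open>Conventions: an n x (n+1) matrix V has columns indexed 0..n (column j is v_j);
  n x n matrices have rows/columns indexed 0..n-1 (paper's index i corresponds to i-1).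
  A weights vector (q_0,...,q_n) is a list Q of length n+1 with Q ! j = q_j.\<close>

definition ratm :: "int mat \<Rightarrow> rat mat" where
  "ratm A = map_mat rat_of_int A"

text \<open>Inverse of a square rational matrix (meaningful for invertible matrices).\<close>
definition minv :: "rat mat \<Rightarrow> rat mat" where
  "minv A = the (mat_inverse A)"

definition mstar :: "rat mat \<Rightarrow> rat mat" where
  "mstar A = transpose_mat (minv A)"

definition del_col :: "'a mat \<Rightarrow> nat \<Rightarrow> 'a mat" where
  "del_col V j = mat (dim_row V) (dim_col V - 1) (\<lambda>(i,k). V $$ (i, if k < j then k else Suc k))"

definition Vdet :: "int mat \<Rightarrow> nat \<Rightarrow> int" where
  "Vdet V j = det (del_col V j)"

definition V0 :: "int mat \<Rightarrow> int mat" where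
  "V0 V = del_col V 0"

definition F_admissible :: "nat \<Rightarrow> int mat \<Rightarrow> bool" where
  "F_admissible n V \<longleftrightarrow> V \<in> carrier_mat n (Suc n)
     \<and> (\<forall>j\<le>n. Vdet V j \<noteq> 0)
     \<and> Gcd {Vdet V j | j. j \<le> n} = 1
     \<and> (\<forall>i<n. (\<Sum>j\<le>n. \<bar>Vdet V j\<bar> * V $$ (i, j)) = 0)"

definition weights_vector :: "int list \<Rightarrow> bool" where
  "weights_vector Q \<longleftrightarrow> Q \<noteq> [] \<and> (\<forall>q\<in>set Q. q > 0) \<and> Gcd (set Q) = 1"

definition reduced :: "int list \<Rightarrow> bool" where
  "reduced Q \<longleftrightarrow> (\<forall>j<length Q. Gcd {Q ! i | i. i < length Q \<and> i \<noteq> j} = 1)"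

definition absdets :: "nat \<Rightarrow> int mat \<Rightarrow> int list" where
  "absdets n V = map (\<lambda>j. \<bar>Vdet V j\<bar>) [0..<Suc n]"

definition wtrans :: "int list \<Rightarrow> rat mat \<Rightarrow> rat mat" where
  "wtrans Q A = mstar A *
     (rat_of_int (Lcm (set Q)) \<cdot>\<^sub>m mat_diag (dim_row A) (\<lambda>i. 1 / rat_of_int (Q ! Suc i)))"

definition associated :: "nat \<Rightarrow> int list \<Rightarrow> int mat \<Rightarrow> int mat \<Rightarrow> bool" where
  "associated n Q W V \<longleftrightarrow> F_admissible n V \<and> Q = absdets n V \<and> ratm W = wtrans Q (ratm (V0 V))"

definition P_admissible :: "nat \<Rightarrow> int mat \<Rightarrow> bool" where
  "P_admissible n W \<longleftrightarrow> W \<in> carrier_mat n n \<and> (\<exists>V. associated n (absdets n V) W V)"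

definition Adj :: "int mat \<Rightarrow> int mat" where
  "Adj W = adj_mat W"

definition row_gcd :: "int mat \<Rightarrow> nat \<Rightarrow> int" where
  "row_gcd W i = Gcd {Adj W $$ (i, k) | k. k < dim_col W}"

definition What :: "int mat \<Rightarrow> rat mat" where
  "What W = mat_diag (dim_row W) (\<lambda>i. rat_of_int \<bar>det W\<bar> / rat_of_int (row_gcd W i)) * minv (ratm W)"

end

theory Submission
  imports Defs
begin

lemma rat_Ints_from_Gcd:
  fixes r :: rat and S :: "int set"
  assumes G: "Gcd S = 1" and I: "\<And>a. a \<in> S \<Longrightarrow> r * of_int a \<in> \<int>"
  shows "r \<in> \<int>"
proof -
  obtain p d where qd: "quotient_of r = (p, d)" by force
  have d0: "d > 0" using quotient_of_denom_pos[OF qd] .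
  have cop: "coprime p d" using quotient_of_coprime[OF qd] .
  have r: "r = of_int p / of_int d" using quotient_of_div[OF qd] .
  have "d dvd a" if a: "a \<in> S" for a
  proof -
    from I[OF a] obtain z where z: "r * of_int a = of_int z" by (auto elim: Ints_cases)
    hence "of_int p * of_int a = of_int z * (of_int d :: rat)" using d0 unfolding r
      by (simp add: field_simps)
    hence "p * a = z * d" by (metis of_int_eq_iff of_int_mult)
    hence "d dvd p * a" by simp
    thus ?thesis using cop by (metis coprime_commute coprime_dvd_mult_right_iff)
  qed
  hence "d dvd Gcd S" by (rule Gcd_greatest)
  hence "d = 1" using G d0 by simp
  thus ?thesis unfolding r by simp
qed

lemma det_col_dvd:
  fixes M :: "int mat"
  assumes M: "M \<in> carrier_mat n n" and j: "j < n" and d: "\<And>i. i < n \<Longrightarrow> g dvd M $$ (i,j)"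
  shows "g dvd det M"
  unfolding laplace_expansion_column[OF M j]
  by (rule dvd_sum, rule dvd_mult2, rule d, simp)

lemma minv_props:
  fixes A :: "rat mat"
  assumes A: "A \<in> carrier_mat n n" and d: "det A \<noteq> 0"
  shows "A * minv A = 1\<^sub>m n" "minv A * A = 1\<^sub>m n" "minv A \<in> carrier_mat n n"
proof -
  have "mat_inverse A \<noteq> None"
    using mat_inverse(1)[OF A, of "()"] det_non_zero_imp_unit[OF A d, of "()"] by auto
  then obtain B where B: "mat_inverse A = Some B" by auto
  hence mB: "minv A = B" unfolding minv_def by simp
  from mat_inverse(2)[OF A B] show "A * minv A = 1\<^sub>m n" "minv A * A = 1\<^sub>m n" "minv A \<in> carrier_mat n n"
    unfolding mB by auto
qed

lemma minv_unique:
  fixes A X :: "rat mat"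
  assumes A: "A \<in> carrier_mat n n" and X: "X \<in> carrier_mat n n" and AX: "A * X = 1\<^sub>m n"
  shows "minv A = X"
proof -
  have "det A * det X = 1" using arg_cong[OF AX, of det] det_mult[OF A X] by simp
  hence d: "det A \<noteq> 0" by auto
  note m = minv_props[OF A d]
  have "minv A = minv A * (A * X)" using AX m(3) by simp
  also have "\<dots> = (minv A * A) * X" using m(3) A X by simp
  also have "\<dots> = X" using m(2) X by simp
  finally show ?thesis .
qed

lemma mat_diag_cong:
  assumes "\<And>i. i < n \<Longrightarrow> f i = g i"
  shows "mat_diag n f = mat_diag n g"
  by (rule eq_matI, auto simp: mat_diag_def assms)

lemma main_assoc:
  assumes as: "associated n Q W V" and red: "reduced Q"
  defines "A \<equiv> ratm (V0 V)"
  shows "W \<in> carrier_mat n n \<and> What W = transpose_mat A \<and> wtrans Q A = ratm W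
    \<and> rat_of_int (Q ! 0) = \<bar>det (What W)\<bar>
    \<and> (\<forall>i<n. rat_of_int (Q ! Suc i) = rat_of_int (row_gcd W i) / rat_of_int (Gcd {Adj W $$ (i, k) | i k. i < n \<and> k < n}))
    \<and> rat_of_int (Lcm (set Q)) = rat_of_int \<bar>det W\<bar> / rat_of_int (Gcd {Adj W $$ (i, k) | i k. i < n \<and> k < n})
    \<and> length Q = Suc n"
proof -
  from as have F: "F_admissible n V" and Qd: "Q = absdets n V" and Wd: "ratm W = wtrans Q A"
    unfolding associated_def A_def by auto
  from F have Vc: "V \<in> carrier_mat n (Suc n)" and Vn: "\<And>j. j \<le> n \<Longrightarrow> Vdet V j \<noteq> 0"
    unfolding F_admissible_def by auto
  have lenQ: "length Q = Suc n" unfolding Qd absdets_def by simp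
  have Qj: "\<And>j. j \<le> n \<Longrightarrow> Q ! j = \<bar>Vdet V j\<bar>" unfolding Qd absdets_def
    by (simp del: upt_Suc add: nth_map)
  have qpos: "\<And>j. j \<le> n \<Longrightarrow> Q ! j > 0" using Qj Vn by auto
  define A0 where "A0 = V0 V"
  have A0c: "A0 \<in> carrier_mat n n" using Vc unfolding A0_def V0_def del_col_def by auto
  have A0e: "\<And>i k. i < n \<Longrightarrow> k < n \<Longrightarrow> A0 $$ (i,k) = V $$ (i, Suc k)"
    using Vc unfolding A0_def V0_def del_col_def by auto
  have dA0: "det A0 = Vdet V 0" unfolding A0_def V0_def Vdet_def by simp
  have A: "A = ratm A0" unfolding A_def A0_def ..
  have Ac: "A \<in> carrier_mat n n" using A0c unfolding A ratm_def by simp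
  have Ae: "\<And>i k. i < n \<Longrightarrow> k < n \<Longrightarrow> A $$ (i,k) = of_int (A0 $$ (i,k))"
    using A0c unfolding A ratm_def by auto
  have dA: "det A = of_int (Vdet V 0)" unfolding A ratm_def dA0[symmetric] by simp
  have dA_nz: "det A \<noteq> 0" using dA Vn[of 0] by simp
  note Bp = minv_props[OF Ac dA_nz]
  define B where "B = minv A"
  define \<delta> where "\<delta> = Lcm (set Q)"
  have fin: "finite (set Q)" by simp
  have "0 \<notin> set Q" using qpos lenQ by (fastforce simp: in_set_conv_nth less_Suc_eq_le)
  hence d_nz: "\<delta> \<noteq> 0" unfolding \<delta>_def using Lcm_0_iff[OF fin] by simp
  have d_ge: "\<delta> \<ge> 0" unfolding \<delta>_def by simp
  define q where "q = (\<lambda>i. rat_of_int (Q ! Suc i))"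
  have q_nz: "\<And>i. i < n \<Longrightarrow> q i \<noteq> 0" unfolding q_def using qpos by (metis Suc_leI less_irrefl of_int_eq_0_iff)
  define E where "E = mat_diag n (\<lambda>i. of_int \<delta> / q i)"
  have Ec: "E \<in> carrier_mat n n" unfolding E_def by simp
  have Bc: "B \<in> carrier_mat n n" using Bp unfolding B_def by simp
  have "of_int \<delta> \<cdot>\<^sub>m mat_diag n (\<lambda>i. 1 / rat_of_int (Q ! Suc i)) = E"
    unfolding E_def q_def by (rule eq_matI, auto simp: mat_diag_def)
  hence Wr: "ratm W = transpose_mat B * E"
    unfolding Wd wtrans_def mstar_def B_def \<delta>_def using Ac by simp
  define X where "X = mat_diag n (\<lambda>i. q i / of_int \<delta>) * transpose_mat A"
  have Xc: "X \<in> carrier_mat n n" unfolding X_def using Ac by (intro mult_carrier_mat[of _ n n]) auto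
  have "E * mat_diag n (\<lambda>i. q i / of_int \<delta>) = mat_diag n (\<lambda>i. 1)"
    unfolding E_def mat_diag_diag by (rule mat_diag_cong, insert q_nz d_nz, auto)
  hence EX: "E * X = transpose_mat A" unfolding X_def
    using Ac Ec by (subst assoc_mult_mat[symmetric, of _ n n _ n _ n], auto)
  have WX: "ratm W * X = 1\<^sub>m n"
  proof -
    have "ratm W * X = transpose_mat B * (E * X)" unfolding Wr using Bc Ec Xc by simp
    also have "\<dots> = transpose_mat (A * B)" unfolding EX using transpose_mult[OF Ac Bc] by simp
    also have "\<dots> = 1\<^sub>m n" using Bp unfolding B_def by simp
    finally show ?thesis .
  qed
  have Wrc: "ratm W \<in> carrier_mat n n" unfolding Wr using Bc Ec by simp
  hence Wc: "W \<in> carrier_mat n n" unfolding ratm_def by simp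
  have mW: "minv (ratm W) = X" by (rule minv_unique[OF Wrc Xc WX])
  have "det (ratm W) * det X = 1" using arg_cong[OF WX, of det] det_mult[OF Wrc Xc] by simp
  hence detW: "det W \<noteq> 0" unfolding ratm_def by auto
  have adjc: "Adj W \<in> carrier_mat n n" unfolding Adj_def using adj_mat(1)[OF Wc] .
  have adjr: "ratm (Adj W) = of_int (det W) \<cdot>\<^sub>m X"
  proof -
    have "ratm (Adj W) * ratm W = ratm (Adj W * W)" unfolding ratm_def
      by (rule of_int_hom.mat_hom_mult[symmetric, OF adjc Wc])
    also have "\<dots> = of_int (det W) \<cdot>\<^sub>m 1\<^sub>m n" unfolding Adj_def adj_mat(3)[OF Wc] ratm_def
      by (rule eq_matI, auto)
    finally have 1: "ratm (Adj W) * ratm W = of_int (det W) \<cdot>\<^sub>m 1\<^sub>m n" .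
    have rAc: "ratm (Adj W) \<in> carrier_mat n n" using adjc unfolding ratm_def by simp
    have "ratm (Adj W) = ratm (Adj W) * (ratm W * X)" unfolding WX using rAc by simp
    also have "\<dots> = (ratm (Adj W) * ratm W) * X" using rAc Wrc Xc by simp
    also have "\<dots> = of_int (det W) \<cdot>\<^sub>m X" unfolding 1 using Xc
      by (subst mult_smult_assoc_mat[of _ n n _ n], auto)
    finally show ?thesis .
  qed
  have Xe: "\<And>i k. i<n \<Longrightarrow> k<n \<Longrightarrow> X $$ (i,k) = q i / of_int \<delta> * of_int (A0 $$ (k,i))"
    unfolding X_def using Ac Ae by (subst mat_diag_mult_left[of _ n n], auto)
  define c where "c = rat_of_int (det W) / of_int \<delta>"
  have adje: "\<And>i k. i<n \<Longrightarrow> k<n \<Longrightarrow> of_int (Adj W $$ (i,k)) = c * q i * of_int (A0 $$ (k,i))"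
  proof -
    fix i k assume ik: "i < n" "k < n"
    have "ratm (Adj W) $$ (i,k) = (of_int (det W) \<cdot>\<^sub>m X) $$ (i,k)" unfolding adjr ..
    thus "of_int (Adj W $$ (i,k)) = c * q i * of_int (A0 $$ (k,i))"
      using ik adjc Xc Xe[OF ik] unfolding ratm_def c_def by simp
  qed
  have colg: "Gcd {A0 $$ (k,i) | k. k < n} = 1" if i: "i < n" for i
  proof -
    define g where "g = Gcd {A0 $$ (k,i) | k. k < n}"
    have "g dvd Q ! j" if j: "j \<le> n" "j \<noteq> Suc i" for j
    proof -
      define i' where "i' = (if Suc i < j then Suc i else i)"
      have M: "del_col V j \<in> carrier_mat n n" using Vc unfolding del_col_def by auto
      have "g dvd det (del_col V j)"
      proof (rule det_col_dvd[OF M])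
        show "i' < n" using i j unfolding i'_def by auto
        fix k assume k: "k < n"
        have "del_col V j $$ (k, i') = V $$ (k, Suc i)" using Vc k i j unfolding del_col_def i'_def by auto
        also have "\<dots> = A0 $$ (k,i)" using A0e k i by simp
        finally show "g dvd del_col V j $$ (k,i')" unfolding g_def using k by (auto intro: Gcd_dvd)
      qed
      thus ?thesis using Qj[OF j(1)] unfolding Vdet_def by simp
    qed
    hence "g dvd Gcd {Q ! m | m. m < length Q \<and> m \<noteq> Suc i}"
      by (intro Gcd_greatest) (auto simp: lenQ)
    moreover have "Gcd {Q ! m | m. m < length Q \<and> m \<noteq> Suc i} = 1"
      using red i lenQ unfolding reduced_def by auto
    ultimately have "g dvd 1" by simp
    moreover have "g \<ge> 0" unfolding g_def by simp
    ultimately show ?thesis unfolding g_def[symmetric] by simp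
  qed
  have cq_int: "c * q i \<in> \<int>" if i: "i < n" for i
  proof (rule rat_Ints_from_Gcd[OF colg[OF i]])
    fix a assume "a \<in> {A0 $$ (k,i) | k. k < n}"
    then obtain k where k: "k < n" and a: "a = A0 $$ (k,i)" by auto
    show "c * q i * of_int a \<in> \<int>" unfolding a adje[OF i k, symmetric] by simp
  qed
  have "{Q ! m | m. m < length Q \<and> m \<noteq> 0} = {Q ! Suc i | i. i < n}"
    unfolding lenQ by (auto, metis Suc_less_SucD gr0_conv_Suc)
  hence qgcd: "Gcd {Q ! Suc i | i. i < n} = 1" using red lenQ unfolding reduced_def by auto
  have "c \<in> \<int>"
  proof (rule rat_Ints_from_Gcd[OF qgcd])
    fix a assume "a \<in> {Q ! Suc i | i. i < n}"
    then obtain i where i: "i < n" and a: "a = Q ! Suc i" by auto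
    show "c * of_int a \<in> \<int>" using cq_int[OF i] unfolding a q_def .
  qed
  then obtain m where m: "c = of_int m" by (auto elim: Ints_cases)
  have detWm: "det W = m * \<delta>" using m d_nz unfolding c_def
    by (metis (mono_tags, lifting) divide_eq_eq of_int_eq_0_iff of_int_eq_iff of_int_mult)
  have m_nz: "m \<noteq> 0" using detWm detW by auto
  have adji: "Adj W $$ (i,k) = m * Q ! Suc i * A0 $$ (k,i)" if ik: "i < n" "k < n" for i k
    using adje[OF ik] unfolding m q_def by (metis of_int_eq_iff of_int_mult)
  have rg: "row_gcd W i = \<bar>m\<bar> * Q ! Suc i" if i: "i < n" for i
  proof -
    have "{Adj W $$ (i,k) | k. k < dim_col W} = (*) (m * Q ! Suc i) ` {A0 $$ (k,i) | k. k < n}"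
      using Wc adji[OF i] by (auto; metis)
    hence "row_gcd W i = Gcd ((*) (m * Q ! Suc i) ` {A0 $$ (k,i) | k. k < n})"
      unfolding row_gcd_def by simp
    also have "\<dots> = normalize (m * Q ! Suc i * 1)"
      unfolding Gcd_mult colg[OF i] ..
    finally have "row_gcd W i = normalize (m * Q ! Suc i * 1)" .
    thus ?thesis using qpos[of "Suc i"] i by (simp add: abs_mult)
  qed
  define s where "s = Gcd {Adj W $$ (i, k) | i k. i < n \<and> k < n}"
  define T where "T = {Q ! Suc i * A0 $$ (k,i) | i k. i < n \<and> k < n}"
  have GT: "Gcd T = 1"
  proof -
    have "Gcd T dvd Q ! Suc i" if i: "i < n" for i
    proof -
      have "Gcd T dvd Gcd ((*) (Q ! Suc i) ` {A0 $$ (k,i) | k. k < n})"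
        by (rule Gcd_greatest, rule Gcd_dvd, auto simp: T_def i; use i in blast)
      also have "\<dots> = Q ! Suc i" unfolding Gcd_mult colg[OF i] using qpos[of "Suc i"] i by simp
      finally show ?thesis .
    qed
    hence "Gcd T dvd Gcd {Q ! Suc i | i. i < n}" by (intro Gcd_greatest) auto
    hence "Gcd T dvd 1" unfolding qgcd .
    moreover have "Gcd T \<ge> 0" by simp
    ultimately show ?thesis by simp
  qed
  have s: "s = \<bar>m\<bar>"
  proof -
    have "{Adj W $$ (i, k) | i k. i < n \<and> k < n} = (*) m ` T"
      unfolding T_def using adji by (auto simp: mult.assoc) (metis mult.assoc)
    hence "s = Gcd ((*) m ` T)" unfolding s_def by simp
    also have "\<dots> = normalize (m * 1)" unfolding Gcd_mult GT ..
    finally show ?thesis by simp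
  qed
  have "What W = mat_diag n (\<lambda>i. of_int \<bar>det W\<bar> / of_int (row_gcd W i)) * X"
    unfolding What_def mW using Wc by simp
  also have "mat_diag n (\<lambda>i. of_int \<bar>det W\<bar> / of_int (row_gcd W i)) = E"
    unfolding E_def
  proof (rule mat_diag_cong)
    fix i assume i: "i < n"
    show "rat_of_int \<bar>det W\<bar> / rat_of_int (row_gcd W i) = rat_of_int \<delta> / q i"
      unfolding rg[OF i] detWm q_def using m_nz d_ge by (simp add: abs_mult)
  qed
  finally have WhatA: "What W = transpose_mat A" unfolding EX .
  have 1: "wtrans Q A = ratm W" using Wd by simp
  have 2: "rat_of_int (Q ! 0) = \<bar>det (What W)\<bar>"
    unfolding WhatA det_transpose[OF Ac] dA using Qj[of 0] by simp
  have 3: "\<forall>i<n. rat_of_int (Q ! Suc i) = rat_of_int (row_gcd W i) / rat_of_int s"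
    using rg s m_nz by simp
  have 4: "rat_of_int (Lcm (set Q)) = rat_of_int \<bar>det W\<bar> / rat_of_int s"
    unfolding s detWm \<delta>_def[symmetric] using m_nz d_ge by (simp add: abs_mult)
  show ?thesis using Wc WhatA 1 2 3 4 lenQ unfolding s_def by blast
qed

lemma col0_eq:
  assumes F: "F_admissible n V" and i: "i < n"
  shows "\<bar>Vdet V 0\<bar> * V $$ (i,0) = - (\<Sum>k<n. \<bar>Vdet V (Suc k)\<bar> * V $$ (i, Suc k))"
proof -
  from F i have "(\<Sum>j\<le>n. \<bar>Vdet V j\<bar> * V $$ (i, j)) = 0" unfolding F_admissible_def by auto
  hence "(\<Sum>j<Suc n. \<bar>Vdet V j\<bar> * V $$ (i, j)) = 0" unfolding lessThan_Suc_atMost .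
  thus ?thesis unfolding sum.lessThan_Suc_shift by linarith
qed

lemma V0_entry:
  assumes "V \<in> carrier_mat n (Suc n)" "i < n" "k < n"
  shows "V0 V $$ (i,k) = V $$ (i, Suc k)"
  using assms unfolding V0_def del_col_def by auto

theorem mainTheorem9:
  fixes n :: nat and W :: "int mat" and Q :: "int list"
  assumes "P_admissible n W"
    and "weights_vector Q" and "reduced Q"
    and "\<exists>V. associated n Q W V"
  shows "(wtrans Q (transpose_mat (What W)) = ratm W)
    \<and> (let s = Gcd {Adj W $$ (i, k) | i k. i < n \<and> k < n} in
           rat_of_int (Q ! 0) = \<bar>det (What W)\<bar>
         \<and> (\<forall>i<n. rat_of_int (Q ! Suc i) = rat_of_int (row_gcd W i) / rat_of_int s)
         \<and> rat_of_int (Lcm (set Q)) = rat_of_int \<bar>det W\<bar> / rat_of_int s)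
    \<and> (\<forall>Q1 Q2. weights_vector Q1 \<and> reduced Q1 \<and> (\<exists>V. associated n Q1 W V)
              \<and> weights_vector Q2 \<and> reduced Q2 \<and> (\<exists>V. associated n Q2 W V) \<longrightarrow> Q1 = Q2)
    \<and> (\<exists>!V. associated n Q W V)"
proof -
  from assms(4) obtain V where as: "associated n Q W V" by auto
  note M = main_assoc[OF as assms(3)]
  have part_c: "\<forall>Q1 Q2. weights_vector Q1 \<and> reduced Q1 \<and> (\<exists>V. associated n Q1 W V)
              \<and> weights_vector Q2 \<and> reduced Q2 \<and> (\<exists>V. associated n Q2 W V) \<longrightarrow> Q1 = Q2"
  proof (intro allI impI)
    fix Q1 Q2 assume h: "weights_vector Q1 \<and> reduced Q1 \<and> (\<exists>V. associated n Q1 W V)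
              \<and> weights_vector Q2 \<and> reduced Q2 \<and> (\<exists>V. associated n Q2 W V)"
    then obtain V1 V2 where a1: "associated n Q1 W V1" and a2: "associated n Q2 W V2"
      and r1: "reduced Q1" and r2: "reduced Q2" by auto
    note M1 = main_assoc[OF a1 r1] and M2 = main_assoc[OF a2 r2]
    show "Q1 = Q2"
    proof (rule nth_equalityI)
      show "length Q1 = length Q2" using M1 M2 by simp
      fix j assume "j < length Q1"
      hence j: "j < Suc n" using M1 by simp
      show "Q1 ! j = Q2 ! j"
      proof (cases j)
        case 0
        have "rat_of_int (Q1 ! 0) = rat_of_int (Q2 ! 0)" using M1 M2 by argo
        then show ?thesis using 0 by simp
      next
        case (Suc i)
        with j have "i < n" by simp
        hence "rat_of_int (Q1 ! Suc i) = rat_of_int (Q2 ! Suc i)" using M1 M2 by auto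
        then show ?thesis using Suc by simp
      qed
    qed
  qed
  have part_d: "\<exists>!V. associated n Q W V"
  proof (rule ex1I[of _ V])
    show "associated n Q W V" by fact
    fix V' assume a': "associated n Q W V'"
    note M' = main_assoc[OF a' assms(3)]
    have "transpose_mat (ratm (V0 V')) = transpose_mat (ratm (V0 V))" using conjunct1[OF conjunct2[OF M]] conjunct1[OF conjunct2[OF M']] by simp
    hence eqA: "ratm (V0 V') = ratm (V0 V)" by (metis transpose_transpose)
    from as have F: "F_admissible n V" and Qd: "Q = absdets n V" unfolding associated_def by auto
    from a' have F': "F_admissible n V'" and Qd': "Q = absdets n V'" unfolding associated_def by auto
    from F have Vc: "V \<in> carrier_mat n (Suc n)" unfolding F_admissible_def by auto
    from F' have Vc': "V' \<in> carrier_mat n (Suc n)" unfolding F_admissible_def by auto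
    have absV: "\<bar>Vdet V' j\<bar> = \<bar>Vdet V j\<bar>" if "j \<le> n" for j
    proof -
      have "absdets n V' ! j = absdets n V ! j" using Qd Qd' by simp
      thus ?thesis using that unfolding absdets_def by (simp del: upt_Suc add: nth_map)
    qed
    have nz: "Vdet V 0 \<noteq> 0" using F unfolding F_admissible_def by auto
    have sc: "V' $$ (i, Suc k) = V $$ (i, Suc k)" if "i < n" "k < n" for i k
    proof -
      have "ratm (V0 V') $$ (i,k) = ratm (V0 V) $$ (i,k)" using eqA by simp
      hence "V0 V' $$ (i,k) = V0 V $$ (i,k)" using that Vc Vc' unfolding ratm_def V0_def del_col_def by simp
      thus ?thesis using V0_entry[OF Vc that] V0_entry[OF Vc' that] by simp
    qed
    show "V' = V"
    proof (rule eq_matI)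
      show "dim_row V' = dim_row V" "dim_col V' = dim_col V" using Vc Vc' by auto
      fix i j assume ij: "i < dim_row V" "j < dim_col V"
      hence i: "i < n" and j: "j < Suc n" using Vc by auto
      show "V' $$ (i,j) = V $$ (i,j)"
      proof (cases j)
        case (Suc k)
        then show ?thesis using sc[OF i] j by simp
      next
        case 0
        have "\<bar>Vdet V 0\<bar> * V' $$ (i,0) = \<bar>Vdet V 0\<bar> * V $$ (i,0)"
          using col0_eq[OF F i] col0_eq[OF F' i] absV sc[OF i] by simp
        thus ?thesis using nz 0 by simp
      qed
    qed
  qed
  have Wh: "What W = transpose_mat (ratm (V0 V))" and wt: "wtrans Q (ratm (V0 V)) = ratm W"
    using M by blast+
  have a: "wtrans Q (transpose_mat (What W)) = ratm W" unfolding Wh using wt by simp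
  show ?thesis unfolding Let_def using a M part_c part_d by blast
qed

end
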